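(* Let $\mathbb{K}$ be a class of frames definable in $\mathbf{K}$. Then $\mathbb{K}$ is definable in $\mathbf{K}\mathsf{biG}$ and $\mathbf{K}\mathsf{G}^2$.
   Context: A set of formulas $\Sigma$ defines a class of frames $\mathbb{K}$ in a logic $\mathbf{L}$ iff $\mathfrak{F}\in\mathbb{K}$ exactly when $\mathfrak{F}\models_\mathbf{L}\Sigma$. $\mathbf{K}$ is classical modal logic. $\mathbf{K}\mathsf{biG}$ is modal bi-Gödel logic on crisp frames: language over $\wedge,\vee,\rightarrow,\ominus$ (Gödel coimplication, $b\ominus_\mathsf{G}a=0$ if $b\le a$, else $b$), $\Box,\lozenge$, a single valuation into $[0,1]$ with Gödel operations ($\min$, $\max$, $a\rightarrow_\mathsf{G}b=1$ if $a\le b$ else $b$), $\Box$ as infimum and $\lozenge$ as supremum over $R$-successors, validity meaning value $1$ everywhere. $\mathbf{K}\mathsf{G}^2$ is its extension by a De Morgan negation $\neg$, interpreted on crisp frames with two valuations $v_1,v_2$ (support of truth/falsity) swapped by $\neg$, validity meaning $v_1=1$ and $v_2=0$ everywhere. $\mathbf{K}$ faithfully embeds into $\mathfrak{GK}^c$ (crisp modal Gödel logic) via $p\mapsto{\sim\sim}p$, where ${\sim}\phi:=\phi\rightarrow\mathbf{0}$; and $\mathbf{K}\mathsf{biG}$, $\mathbf{K}\mathsf{G}^2$ are conservative over $\mathfrak{GK}^c$ on crisp frames. *)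

theory Defs
  imports Complex_Main
begin

type_synonym 'w frame = "'w set \<times> ('w \<Rightarrow> 'w \<Rightarrow> bool)"

definition is_frame :: "'w frame \<Rightarrow> bool" where
  "is_frame F \<longleftrightarrow> fst F \<noteq> {} \<and> (\<forall>x y. snd F x y \<longrightarrow> x \<in> fst F \<and> y \<in> fst F)"

definition succs :: "'w frame \<Rightarrow> 'w \<Rightarrow> 'w set" where
  "succs F w = {u \<in> fst F. snd F w u}"

datatype kfm = KVar nat | KBot | KAnd kfm kfm | KOr kfm kfm | KImp kfm kfm
  | KBox kfm | KDia kfm

fun ksat :: "'w frame \<Rightarrow> (nat \<Rightarrow> 'w set) \<Rightarrow> 'w \<Rightarrow> kfm \<Rightarrow> bool" where
  "ksat F V w (KVar p) = (w \<in> V p)"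
| "ksat F V w KBot = False"
| "ksat F V w (KAnd a b) = (ksat F V w a \<and> ksat F V w b)"
| "ksat F V w (KOr a b) = (ksat F V w a \<or> ksat F V w b)"
| "ksat F V w (KImp a b) = (ksat F V w a \<longrightarrow> ksat F V w b)"
| "ksat F V w (KBox a) = (\<forall>u \<in> succs F w. ksat F V u a)"
| "ksat F V w (KDia a) = (\<exists>u \<in> succs F w. ksat F V u a)"

definition k_valid :: "'w frame \<Rightarrow> kfm set \<Rightarrow> bool" where
  "k_valid F \<Sigma> \<longleftrightarrow> (\<forall>V. \<forall>w \<in> fst F. \<forall>\<phi> \<in> \<Sigma>. ksat F V w \<phi>)"

definition gimp :: "real \<Rightarrow> real \<Rightarrow> real" where
  "gimp a b = (if a \<le> b then 1 else b)"

definition gcoimp :: "real \<Rightarrow> real \<Rightarrow> real" where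
  "gcoimp b a = (if b \<le> a then 0 else b)"

definition infU :: "real set \<Rightarrow> real" where
  "infU S = (if S = {} then 1 else Inf S)"

definition supU :: "real set \<Rightarrow> real" where
  "supU S = (if S = {} then 0 else Sup S)"

text \<open>One datatype for both languages; KbiG formulas are those without GNeg.\<close>
datatype gfm = GVar nat | GZero | GOne | GAnd gfm gfm | GOr gfm gfm
  | GImp gfm gfm | GCoimp gfm gfm | GBox gfm | GDia gfm | GNeg gfm

fun neg_free :: "gfm \<Rightarrow> bool" where
  "neg_free (GVar p) = True"
| "neg_free GZero = True"
| "neg_free GOne = True"
| "neg_free (GAnd a b) = (neg_free a \<and> neg_free b)"
| "neg_free (GOr a b) = (neg_free a \<and> neg_free b)"
| "neg_free (GImp a b) = (neg_free a \<and> neg_free b)"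
| "neg_free (GCoimp a b) = (neg_free a \<and> neg_free b)"
| "neg_free (GBox a) = neg_free a"
| "neg_free (GDia a) = neg_free a"
| "neg_free (GNeg a) = False"

fun bival :: "'w frame \<Rightarrow> (nat \<Rightarrow> 'w \<Rightarrow> real) \<Rightarrow> 'w \<Rightarrow> gfm \<Rightarrow> real" where
  "bival F v w (GVar p) = v p w"
| "bival F v w GZero = 0"
| "bival F v w GOne = 1"
| "bival F v w (GAnd a b) = min (bival F v w a) (bival F v w b)"
| "bival F v w (GOr a b) = max (bival F v w a) (bival F v w b)"
| "bival F v w (GImp a b) = gimp (bival F v w a) (bival F v w b)"
| "bival F v w (GCoimp a b) = gcoimp (bival F v w a) (bival F v w b)"
| "bival F v w (GBox a) = infU ((\<lambda>u. bival F v u a) ` succs F w)"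
| "bival F v w (GDia a) = supU ((\<lambda>u. bival F v u a) ` succs F w)"
| "bival F v w (GNeg a) = 0" \<comment> \<open>not in the KbiG language; never used\<close>

definition unit_val :: "'w frame \<Rightarrow> (nat \<Rightarrow> 'w \<Rightarrow> real) \<Rightarrow> bool" where
  "unit_val F v \<longleftrightarrow> (\<forall>p. \<forall>w \<in> fst F. 0 \<le> v p w \<and> v p w \<le> 1)"

definition biG_valid :: "'w frame \<Rightarrow> gfm set \<Rightarrow> bool" where
  "biG_valid F \<Sigma> \<longleftrightarrow>
     (\<forall>v. unit_val F v \<longrightarrow> (\<forall>w \<in> fst F. \<forall>\<phi> \<in> \<Sigma>. bival F v w \<phi> = 1))"

text \<open>KG2 semantics: two valuations (support of truth, support of falsity),
computed simultaneously as a pair (v1, v2).\<close>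
fun g2val :: "'w frame \<Rightarrow> (nat \<Rightarrow> 'w \<Rightarrow> real) \<Rightarrow> (nat \<Rightarrow> 'w \<Rightarrow> real) \<Rightarrow> 'w
               \<Rightarrow> gfm \<Rightarrow> real \<times> real" where
  "g2val F v1 v2 w (GVar p) = (v1 p w, v2 p w)"
| "g2val F v1 v2 w GZero = (0, 1)"
| "g2val F v1 v2 w GOne = (1, 0)"
| "g2val F v1 v2 w (GNeg a) = (snd (g2val F v1 v2 w a), fst (g2val F v1 v2 w a))"
| "g2val F v1 v2 w (GAnd a b) =
     (min (fst (g2val F v1 v2 w a)) (fst (g2val F v1 v2 w b)),
      max (snd (g2val F v1 v2 w a)) (snd (g2val F v1 v2 w b)))"
| "g2val F v1 v2 w (GOr a b) =
     (max (fst (g2val F v1 v2 w a)) (fst (g2val F v1 v2 w b)),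
      min (snd (g2val F v1 v2 w a)) (snd (g2val F v1 v2 w b)))"
| "g2val F v1 v2 w (GImp a b) =
     (gimp (fst (g2val F v1 v2 w a)) (fst (g2val F v1 v2 w b)),
      gcoimp (snd (g2val F v1 v2 w b)) (snd (g2val F v1 v2 w a)))"
| "g2val F v1 v2 w (GCoimp a b) =
     (gcoimp (fst (g2val F v1 v2 w a)) (fst (g2val F v1 v2 w b)),
      gimp (snd (g2val F v1 v2 w b)) (snd (g2val F v1 v2 w a)))"
| "g2val F v1 v2 w (GBox a) =
     (infU ((\<lambda>u. fst (g2val F v1 v2 u a)) ` succs F w),
      supU ((\<lambda>u. snd (g2val F v1 v2 u a)) ` succs F w))"
| "g2val F v1 v2 w (GDia a) =
     (supU ((\<lambda>u. fst (g2val F v1 v2 u a)) ` succs F w),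
      infU ((\<lambda>u. snd (g2val F v1 v2 u a)) ` succs F w))"

definition G2_valid :: "'w frame \<Rightarrow> gfm set \<Rightarrow> bool" where
  "G2_valid F \<Sigma> \<longleftrightarrow>
     (\<forall>v1 v2. unit_val F v1 \<longrightarrow> unit_val F v2 \<longrightarrow>
        (\<forall>w \<in> fst F. \<forall>\<phi> \<in> \<Sigma>. g2val F v1 v2 w \<phi> = (1, 0)))"

definition K_defines :: "kfm set \<Rightarrow> 'w frame set \<Rightarrow> bool" where
  "K_defines \<Sigma> \<KK> \<longleftrightarrow> (\<forall>F. is_frame F \<longrightarrow> (F \<in> \<KK> \<longleftrightarrow> k_valid F \<Sigma>))"

definition biG_defines :: "gfm set \<Rightarrow> 'w frame set \<Rightarrow> bool" where
  "biG_defines \<Sigma> \<KK> \<longleftrightarrow> (\<forall>\<phi> \<in> \<Sigma>. neg_free \<phi>) \<and>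
     (\<forall>F. is_frame F \<longrightarrow> (F \<in> \<KK> \<longleftrightarrow> biG_valid F \<Sigma>))"

definition G2_defines :: "gfm set \<Rightarrow> 'w frame set \<Rightarrow> bool" where
  "G2_defines \<Sigma> \<KK> \<longleftrightarrow> (\<forall>F. is_frame F \<longrightarrow> (F \<in> \<KK> \<longleftrightarrow> G2_valid F \<Sigma>))"

end

theory Submission
  imports Defs
begin
lemma infU01: "infU ((\<lambda>u. if P u then (1::real) else 0) ` S) = (if \<forall>u\<in>S. P u then 1 else 0)"
proof (cases "\<forall>u\<in>S. P u")
  case True
  then have "(\<lambda>u. if P u then (1::real) else 0) ` S = (if S = {} then {} else {1})" by auto
  then show ?thesis using True by (simp add: infU_def)
next
  case False
  then obtain u where u: "u \<in> S" "\<not> P u" by blast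
  let ?I = "(\<lambda>u. if P u then (1::real) else 0) ` S"
  have f: "finite ?I" by (rule finite_subset[of _ "{0,1}"]) auto
  have z: "0 \<in> ?I" using u by force
  have ne: "?I \<noteq> {}" using z by blast
  have "Inf ?I = Min ?I" by (rule cInf_eq_Min[OF f ne])
  also have "\<dots> = 0" by (rule Min_eqI[OF f]) (use z in auto)
  finally have "Inf ?I = 0" .
  then show ?thesis using False ne unfolding infU_def by presburger
qed
lemma supU01: "supU ((\<lambda>u. if P u then (1::real) else 0) ` S) = (if \<exists>u\<in>S. P u then 1 else 0)"
proof (cases "\<exists>u\<in>S. P u")
  case False
  then have "(\<lambda>u. if P u then (1::real) else 0) ` S = (if S = {} then {} else {0})" by auto
  then show ?thesis using False by (simp add: supU_def)
next
  case True
  then obtain u where u: "u \<in> S" "P u" by blast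
  let ?I = "(\<lambda>u. if P u then (1::real) else 0) ` S"
  have f: "finite ?I" by (rule finite_subset[of _ "{0,1}"]) auto
  have z: "1 \<in> ?I" using u by force
  have ne: "?I \<noteq> {}" using z by blast
  have "Sup ?I = Max ?I" by (rule cSup_eq_Max[OF f ne])
  also have "\<dots> = 1" by (rule Max_eqI[OF f]) (use z in auto)
  finally have "Sup ?I = 1" .
  then show ?thesis using True ne unfolding supU_def by presburger
qed
lemma infU01': "infU ((\<lambda>u. if P u then (0::real) else 1) ` S) = (if \<exists>u\<in>S. P u then 0 else 1)"
proof -
  have e: "(\<lambda>u. if P u then (0::real) else 1) = (\<lambda>u. if \<not> P u then 1 else 0)" by auto
  have "infU ((\<lambda>u. if P u then (0::real) else 1) ` S) = infU ((\<lambda>u. if \<not> P u then 1 else 0) ` S)"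
    by (simp only: e)
  also have "\<dots> = (if \<forall>u\<in>S. \<not> P u then 1 else 0)" by (rule infU01)
  finally show ?thesis by auto
qed
lemma supU01': "supU ((\<lambda>u. if P u then (0::real) else 1) ` S) = (if \<forall>u\<in>S. P u then 0 else 1)"
proof -
  have e: "(\<lambda>u. if P u then (0::real) else 1) = (\<lambda>u. if \<not> P u then 1 else 0)" by auto
  have "supU ((\<lambda>u. if P u then (0::real) else 1) ` S) = supU ((\<lambda>u. if \<not> P u then 1 else 0) ` S)"
    by (simp only: e)
  also have "\<dots> = (if \<exists>u\<in>S. \<not> P u then 1 else 0)" by (rule supU01)
  finally show ?thesis by auto
qed
fun tr :: "(nat \<Rightarrow> gfm) \<Rightarrow> kfm \<Rightarrow> gfm" where
  "tr A (KVar p) = A p"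
| "tr A KBot = GZero"
| "tr A (KAnd a b) = GAnd (tr A a) (tr A b)"
| "tr A (KOr a b) = GOr (tr A a) (tr A b)"
| "tr A (KImp a b) = GImp (tr A a) (tr A b)"
| "tr A (KBox a) = GBox (tr A a)"
| "tr A (KDia a) = GDia (tr A a)"

definition A1 :: "nat \<Rightarrow> gfm" where
  "A1 p = GImp (GImp (GVar p) GZero) GZero"

definition A2 :: "nat \<Rightarrow> gfm" where
  "A2 p = GAnd (A1 p) (GImp (GNeg (A1 p)) GZero)"

lemma neg_free_tr: "neg_free (tr A1 \<phi>)"
  by (induction \<phi>) (auto simp: A1_def)

lemma bi_tr:
  assumes "\<And>p u. bival F v u (A p) = (if u \<in> V p then 1 else 0)"
  shows "bival F v w (tr A \<phi>) = (if ksat F V w \<phi> then 1 else 0)"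
proof (induction \<phi> arbitrary: w)
  case (KBox \<phi>)
  have e: "(\<lambda>u. bival F v u (tr A \<phi>)) = (\<lambda>u. if ksat F V u \<phi> then 1 else 0)"
    using KBox by auto
  show ?case by (simp only: bival.simps tr.simps ksat.simps e infU01)
next
  case (KDia \<phi>)
  have e: "(\<lambda>u. bival F v u (tr A \<phi>)) = (\<lambda>u. if ksat F V u \<phi> then 1 else 0)"
    using KDia by auto
  show ?case by (simp only: bival.simps tr.simps ksat.simps e supU01)
qed (auto simp: assms gimp_def)

lemma g2_tr:
  assumes "\<And>p u. g2val F v1 v2 u (A p) = (if u \<in> V p then (1,0) else (0,1))"
  shows "g2val F v1 v2 w (tr A \<phi>) = (if ksat F V w \<phi> then (1,0) else (0,1))"
proof (induction \<phi> arbitrary: w)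
  case (KBox \<phi>)
  have e1: "(\<lambda>u. fst (g2val F v1 v2 u (tr A \<phi>))) = (\<lambda>u. if ksat F V u \<phi> then 1 else 0)"
    using KBox by auto
  have e2: "(\<lambda>u. snd (g2val F v1 v2 u (tr A \<phi>))) = (\<lambda>u. if ksat F V u \<phi> then 0 else 1)"
    using KBox by auto
  show ?case by (simp only: g2val.simps tr.simps ksat.simps e1 e2 infU01 supU01') simp
next
  case (KDia \<phi>)
  have e1: "(\<lambda>u. fst (g2val F v1 v2 u (tr A \<phi>))) = (\<lambda>u. if ksat F V u \<phi> then 1 else 0)"
    using KDia by auto
  have e2: "(\<lambda>u. snd (g2val F v1 v2 u (tr A \<phi>))) = (\<lambda>u. if ksat F V u \<phi> then 0 else 1)"
    using KDia by auto
  show ?case by (simp only: g2val.simps tr.simps ksat.simps e1 e2 supU01 infU01') simp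
qed (auto simp: assms gimp_def gcoimp_def)
theorem theorem1:
  fixes \<KK> :: "'w frame set"
  assumes "\<forall>F \<in> \<KK>. is_frame F"
    and "\<exists>\<Sigma>. K_defines \<Sigma> \<KK>"
  shows "(\<exists>\<Sigma>. biG_defines \<Sigma> \<KK>) \<and> (\<exists>\<Sigma>. G2_defines \<Sigma> \<KK>)"
proof -
  obtain \<Sigma> where S: "K_defines \<Sigma> \<KK>" using assms(2) by blast
  have b: "biG_valid F (tr A1 ` \<Sigma>) \<longleftrightarrow> k_valid F \<Sigma>" for F :: "'w frame"
  proof
    assume h: "biG_valid F (tr A1 ` \<Sigma>)"
    show "k_valid F \<Sigma>" unfolding k_valid_def
    proof (intro allI ballI)
      fix V w \<phi> assume w: "w \<in> fst F" and p: "\<phi> \<in> \<Sigma>"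
      define v :: "nat \<Rightarrow> 'w \<Rightarrow> real" where "v p u = (if u \<in> V p then 1 else 0)" for p u
      have "unit_val F v" by (auto simp: unit_val_def v_def)
      with h w p have "bival F v w (tr A1 \<phi>) = 1" by (auto simp: biG_valid_def)
      moreover have "bival F v w (tr A1 \<phi>) = (if ksat F V w \<phi> then 1 else 0)"
        by (rule bi_tr) (simp add: A1_def gimp_def v_def)
      ultimately show "ksat F V w \<phi>" by (auto split: if_splits)
    qed
  next
    assume h: "k_valid F \<Sigma>"
    show "biG_valid F (tr A1 ` \<Sigma>)" unfolding biG_valid_def
    proof (intro allI impI ballI)
      fix v :: "nat \<Rightarrow> 'w \<Rightarrow> real" and w \<psi> assume w: "w \<in> fst F" and p: "\<psi> \<in> tr A1 ` \<Sigma>"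
      then obtain \<phi> where ph: "\<phi> \<in> \<Sigma>" "\<psi> = tr A1 \<phi>" by blast
      define V where "V p = {u. v p u > (0::real)}" for p
      have "bival F v w (tr A1 \<phi>) = (if ksat F V w \<phi> then 1 else 0)"
        by (rule bi_tr) (simp add: A1_def gimp_def V_def)
      then show "bival F v w \<psi> = 1" using h w ph by (simp add: k_valid_def)
    qed
  qed
  have g: "G2_valid F (tr A2 ` \<Sigma>) \<longleftrightarrow> k_valid F \<Sigma>" for F :: "'w frame"
  proof
    assume h: "G2_valid F (tr A2 ` \<Sigma>)"
    show "k_valid F \<Sigma>" unfolding k_valid_def
    proof (intro allI ballI)
      fix V w \<phi> assume w: "w \<in> fst F" and p: "\<phi> \<in> \<Sigma>"
      define v :: "nat \<Rightarrow> 'w \<Rightarrow> real" where "v p u = (if u \<in> V p then 1 else 0)" for p u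
      have "unit_val F v" "unit_val F (\<lambda>_ _. 0)" by (auto simp: unit_val_def v_def)
      with h w p have "g2val F v (\<lambda>_ _. 0) w (tr A2 \<phi>) = (1,0)" by (auto simp: G2_valid_def)
      moreover have "g2val F v (\<lambda>_ _. 0) w (tr A2 \<phi>) = (if ksat F V w \<phi> then (1,0) else (0,1))"
        by (rule g2_tr) (simp add: A2_def A1_def gimp_def gcoimp_def v_def)
      ultimately show "ksat F V w \<phi>" by (auto split: if_splits)
    qed
  next
    assume h: "k_valid F \<Sigma>"
    show "G2_valid F (tr A2 ` \<Sigma>)" unfolding G2_valid_def
    proof (intro allI impI ballI)
      fix v1 v2 :: "nat \<Rightarrow> 'w \<Rightarrow> real" and w \<psi> assume w: "w \<in> fst F" and p: "\<psi> \<in> tr A2 ` \<Sigma>"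
      then obtain \<phi> where ph: "\<phi> \<in> \<Sigma>" "\<psi> = tr A2 \<phi>" by blast
      define V where "V p = {u. v1 p u > (0::real) \<and> \<not> v2 p u \<ge> 1}" for p
      have "g2val F v1 v2 w (tr A2 \<phi>) = (if ksat F V w \<phi> then (1,0) else (0,1))"
        by (rule g2_tr) (simp add: A2_def A1_def gimp_def gcoimp_def V_def)
      then show "g2val F v1 v2 w \<psi> = (1,0)" using h w ph by (simp add: k_valid_def)
    qed
  qed
  have "biG_defines (tr A1 ` \<Sigma>) \<KK>"
    using S b neg_free_tr by (auto simp: biG_defines_def K_defines_def)
  moreover have "G2_defines (tr A2 ` \<Sigma>) \<KK>"
    using S g by (auto simp: G2_defines_def K_defines_def)
  ultimately show ?thesis by blast
qed
end
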